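(* Let $M$ be an automaton with $\mathit{regular\_ta}(M)$. Then $\mathit{tau\_sim}\ M\ (\mathit{tauclose\_ta}\ M)$.
   Context: Actions are $\mathit{NoAct}$ (silent) and $\mathit{AssAct}\ x\ v$. An edge over node type $N$ is a record $(\mathit{source},\mathit{action},\mathit{dest})$ with source and destination in $N$. An automaton over $N$ is a record with a list $\mathit{nodes}$ of nodes, a list $\mathit{edges}$ of edges, and an initial node $\mathit{init\_s}$. $\mathit{regular\_ta}(M)$ means $\mathit{init\_s}(M)\in\mathit{nodes}(M)$ and every edge of $M$ has source and destination in $\mathit{nodes}(M)$. $\mathit{tauclose\_step}\ M\ s\ X = \{s\}\cup X\cup\{n\in\mathit{nodes}(M) : \exists e\in\mathit{edges}(M).\ \mathit{source}\ e\in X \wedge \mathit{action}\ e=\mathit{NoAct}\wedge \mathit{dest}\ e=n\}$; this is monotone in $X$, and $\mathit{tauclose}\ M\ s$ is its least fixed point. $\mathit{tauclose\_ta}\ M$ is the automaton over sets of nodes with: $\mathit{nodes}$ the list of $\mathit{tauclose}\ M\ n$ for $n\in\mathit{nodes}(M)$; $\mathit{init\_s}=\mathit{tauclose}\ M\ (\mathit{init\_s}\ M)$; $\mathit{edges}$ the list of those edges $(\mathit{source}=\mathit{tauclose}\ M\ n_1,\mathit{action}=a,\mathit{dest}=\mathit{tauclose}\ M\ n_2)$, where $n_1,n_2\in\mathit{nodes}(M)$ and $a$ is the action of some edge of $M$, for which there exist $s_1,s_2$ with $\mathit{tauclose}\ M\ s_1=\mathit{tauclose}\ M\ n_1$, $\mathit{tauclose}\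 M\ s_2=\mathit{tauclose}\ M\ n_2$, $a\neq\mathit{NoAct}$, and some $s\in\mathit{tauclose}\ M\ s_1$ with $(\mathit{source}=s,\mathit{action}=a,\mathit{dest}=s_2)\in\mathit{edges}(M)$. For automata $M_1,M_2$, $\mathit{tau\_sim}\ M_1\ M_2$ holds iff there is a relation $R$ between nodes of $M_1$ and nodes of $M_2$ with $R(\mathit{init\_s}\ M_1,\mathit{init\_s}\ M_2)$ such that whenever $R(s_1,s_2)$ and $(\mathit{source}=s_1,\mathit{action}=a,\mathit{dest}=s_1')\in\mathit{edges}(M_1)$, then either ($a=\mathit{NoAct}$ and $R(s_1',s_2)$) or there is $s_2'$ with $(\mathit{source}=s_2,\mathit{action}=a,\mathit{dest}=s_2')\in\mathit{edges}(M_2)$ and $R(s_1',s_2')$. *)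

theory Defs
  imports Main
begin

datatype ('x, 'v) action = NoAct | AssAct 'x 'v

record ('n, 'x, 'v) edge =
  source :: 'n
  action :: "('x, 'v) action"
  dest :: 'n

record ('n, 'x, 'v) ta =
  nodes :: "'n list"
  edges :: "('n, 'x, 'v) edge list"
  init_s :: 'n

definition regular_ta :: "('n, 'x, 'v) ta \<Rightarrow> bool" where
  "regular_ta M \<longleftrightarrow> init_s M \<in> set (nodes M) \<and>
     (\<forall>e \<in> set (edges M). source e \<in> set (nodes M) \<and> dest e \<in> set (nodes M))"

definition tauclose_step :: "('n, 'x, 'v) ta \<Rightarrow> 'n \<Rightarrow> 'n set \<Rightarrow> 'n set" where
  "tauclose_step M s X = {s} \<union> X \<union>
     {n \<in> set (nodes M). \<exists>e \<in> set (edges M). source e \<in> X \<and> action e = NoAct \<and> dest e = n}"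

lemma mono_tauclose_step: "mono (tauclose_step M s)"
  unfolding tauclose_step_def mono_def by blast

definition tauclose :: "('n, 'x, 'v) ta \<Rightarrow> 'n \<Rightarrow> 'n set" where
  "tauclose M s = lfp (tauclose_step M s)"

definition tauclose_ta :: "('n, 'x, 'v) ta \<Rightarrow> ('n set, 'x, 'v) ta" where
  "tauclose_ta M = \<lparr>
     nodes = map (tauclose M) (nodes M),
     edges = [\<lparr>source = tauclose M n1, action = a, dest = tauclose M n2\<rparr>.
               n1 \<leftarrow> nodes M, n2 \<leftarrow> nodes M, a \<leftarrow> map action (edges M),
               \<exists>s1 s2. tauclose M s1 = tauclose M n1 \<and> tauclose M s2 = tauclose M n2 \<and>
                 a \<noteq> NoAct \<and>
                 (\<exists>s \<in> tauclose M s1. \<lparr>source = s, action = a, dest = s2\<rparr> \<in> set (edges M))],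
     init_s = tauclose M (init_s M) \<rparr>"

definition tau_sim :: "('n1, 'x, 'v) ta \<Rightarrow> ('n2, 'x, 'v) ta \<Rightarrow> bool" where
  "tau_sim M1 M2 \<longleftrightarrow> (\<exists>R. R (init_s M1) (init_s M2) \<and>
     (\<forall>s1 s2 a s1'. R s1 s2 \<longrightarrow>
        \<lparr>source = s1, action = a, dest = s1'\<rparr> \<in> set (edges M1) \<longrightarrow>
        ((a = NoAct \<and> R s1' s2) \<or>
         (\<exists>s2'. \<lparr>source = s2, action = a, dest = s2'\<rparr> \<in> set (edges M2) \<and> R s1' s2'))))"

end

theory Submission
  imports Defs
begin

lemma tauclose_fix: "tauclose_step M s (tauclose M s) = tauclose M s"
  unfolding tauclose_def by (rule lfp_fixpoint[OF mono_tauclose_step])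

lemma tauclose_self: "s \<in> tauclose M s"
  using tauclose_fix[of M s] unfolding tauclose_step_def by blast

lemma tauclose_tau:
  assumes "x \<in> tauclose M s" "e \<in> set (edges M)" "source e = x" "action e = NoAct"
    "dest e \<in> set (nodes M)"
  shows "dest e \<in> tauclose M s"
proof -
  have "dest e \<in> tauclose_step M s (tauclose M s)"
    using assms unfolding tauclose_step_def by blast
  thus ?thesis using tauclose_fix by metis
qed

lemma edge_in: "n \<in> set (nodes M) \<Longrightarrow> s1' \<in> set (nodes M) \<Longrightarrow> a \<in> set (map action (edges M)) \<Longrightarrow> a \<noteq> NoAct
 \<Longrightarrow> s \<in> tauclose M n \<Longrightarrow> \<lparr>source = s, action = a, dest = s1'\<rparr> \<in> set (edges M) \<Longrightarrow>
 \<lparr>source = tauclose M n, action = a, dest = tauclose M s1'\<rparr> \<in> set (edges (tauclose_ta M))"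
  unfolding tauclose_ta_def apply (simp only: ta.simps set_concat set_map)
  apply (rule UnionI, rule imageI, rule imageI[of n], assumption)
  apply (simp only: set_concat set_map)
  apply (rule UnionI, rule imageI, rule imageI[of s1'], assumption)
  apply (simp only: set_concat set_map)
  apply (rule UnionI, rule imageI, rule imageI[of a], simp)
  apply auto
  done

theorem theorem2:
  fixes M :: "('n, 'x, 'v) ta"
  assumes "regular_ta M"
  shows "tau_sim M (tauclose_ta M)"
  unfolding tau_sim_def
proof (rule exI[of _ "\<lambda>s T. s \<in> set (nodes M) \<and> (\<exists>n\<in>set (nodes M). T = tauclose M n \<and> s \<in> T)"], rule conjI, goal_cases)
  case 2 show ?case
  proof (intro allI impI)
  fix s1 s2 a s1'
  assume R: "s1 \<in> set (nodes M) \<and> (\<exists>n\<in>set (nodes M). s2 = tauclose M n \<and> s1 \<in> s2)"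
    and E: "\<lparr>source = s1, action = a, dest = s1'\<rparr> \<in> set (edges M)"
  then obtain n where n: "n \<in> set (nodes M)" "s2 = tauclose M n" "s1 \<in> s2" by blast
  have s1': "s1' \<in> set (nodes M)" using assms E unfolding regular_ta_def by (metis edge.select_convs(3))
  show "a = NoAct \<and> (s1' \<in> set (nodes M) \<and> (\<exists>n\<in>set (nodes M). s2 = tauclose M n \<and> s1' \<in> s2)) \<or>
       (\<exists>s2'. \<lparr>source = s2, action = a, dest = s2'\<rparr> \<in> set (edges (tauclose_ta M)) \<and>
              s1' \<in> set (nodes M) \<and> (\<exists>n\<in>set (nodes M). s2' = tauclose M n \<and> s1' \<in> s2'))"
  proof (cases "a = NoAct")
    case True
    have "s1' \<in> s2" unfolding n(2)
      using tauclose_tau[OF n(3)[unfolded n(2)] E] s1' True by simp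
    then show ?thesis using True s1' n(1,2) by (intro disjI1 conjI bexI[of _ n])
  next
    case False
    have am: "a \<in> set (map action (edges M))" using imageI[OF E, of action] by simp
    have "\<lparr>source = s2, action = a, dest = tauclose M s1'\<rparr> \<in> set (edges (tauclose_ta M))"
      unfolding n(2) by (rule edge_in[OF n(1) s1' am False n(3)[unfolded n(2)] E])
    moreover have "\<exists>n\<in>set (nodes M). tauclose M s1' = tauclose M n \<and> s1' \<in> tauclose M s1'"
      by (rule bexI[of _ s1'], rule conjI[OF refl tauclose_self], rule s1')
    ultimately show ?thesis
      by (rule disjI2[OF exI[of _ "tauclose M s1'"], OF conjI[OF _ conjI[OF s1']]])
  qed
  qed
next
  case 1 show ?case
  proof -
    have "init_s (tauclose_ta M) = tauclose M (init_s M)" unfolding tauclose_ta_def by (simp only: ta.select_convs)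
    moreover have "init_s M \<in> set (nodes M)" using assms unfolding regular_ta_def by blast
    ultimately show ?case
      by (intro conjI bexI[of _ "init_s M"]) (simp_all add: tauclose_self)
  qed
qed

end
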